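(* Let $k\ge1$, let $\mathbf f\in[L^2(\Omega)]^d$, and let $(\underline{\mathbf u}_h,p_h)\in\underline{\mathbf V}_{h,0}^k\times Q_{h,0}^{k-1}$, $\underline{\mathbf u}_h=(\mathbf u_h,\widehat{\mathbf u}_h)$, solve $$a(\underline{\mathbf u}_h,\underline{\mathbf v}_h)+b(p_h,\mathbf v_h)=(\mathbf f,\mathbf v_h)_{\mathcal T_h},\qquad b(\mathbf u_h,q_h)+c(p_h,q_h)=0$$ for all $(\underline{\mathbf v}_h,q_h)\in\underline{\mathbf V}_{h,0}^k\times Q_{h,0}^{k-1}$. Write $\mathbf u_h=\mathbf u_h^\partial+\mathbf u_h^o$ with $\mathbf u_h^\partial\in\mathbf V_{h,0}^{k,\partial}$, $\mathbf u_h^o\in\mathbf V_{h}^{k,o}$, and $p_h=\overline p_h+p_h^o$ with $\overline p_h\in\overline Q_h$, $p_h^o\in Q_h^{k-1,o}$. Then $$b(p_h^o,\mathbf v_h^o)=\lambda(\nabla\cdot\mathbf u_h^o,\nabla\cdot\mathbf v_h^o)_{\mathcal T_h}\qquad\text{for all }\mathbf v_h^o\in\mathbf V_h^{k,o}.$$ (Equivalently, in matrix form with respect to fixed bases, $\mathbf B_{u^op^o}\mathbf P^o=\mathbf D_{u^ou^o}\mathbf U^o$, where $\langle\mathbf D_{u^ou^o}\mathbf U^o,\mathbf V^o\rangle_2=\lambda(\nabla\cdot\mathbf u_h^o,\nabla\cdot\mathbf v_h^o)_{\mathcal T_h}$ and $\langle \mathbf B_{u^op^o}\mathbf P^o,\mathbf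 V^o\rangle_2=b(p_h^o,\mathbf v_h^o)$.)
   Context: $\Omega\subset\mathbb R^d$ ($d=2,3$) is a convex polygonal/polyhedral domain, $\mathcal T_h$ a shape-regular, quasi-uniform, conforming simplicial triangulation with mesh size $h$ (maximal element diameter), $\mathcal E_h$ its set of facets, $\mathcal E_h^\partial$ the facets on $\partial\Omega$. $\mathbf n$ denotes a unit normal (outward on $\partial K$), $\mathsf{tang}(\mathbf w)=\mathbf w-(\mathbf w\cdot\mathbf n)\mathbf n$, $\mathbf D(\mathbf u)=\frac12(\nabla\mathbf u+\nabla\mathbf u^T)$. $(\cdot,\cdot)_{\mathcal T_h}=\sum_K(\cdot,\cdot)_{L^2(K)}$, $\langle\cdot,\cdot\rangle_{\partial K}$ the $L^2(\partial K)$ product. $\mathcal P^m(S)$ = polynomials of degree $\le m$ on $S$. Spaces: $\mathbf V_h^k=\{\mathbf v\in H(\mathrm{div};\Omega):\mathbf v|_K\in[\mathcal P^k(K)]^d\ \forall K\}$; $\mathbf V_{h,0}^k=\{\mathbf v\in\mathbf V_h^k:\mathbf v\cdot\mathbf n=0\text{ on every }F\in\mathcal E_h^\partial\}$; for $m\ge0$, $\widehat{\mathbf V}_h^m=\{\widehat{\mathbf v}\in[L^2(\mathcal E_h)]^d:\widehat{\mathbf v}|_F\in[\mathcal P^m(F)]^d,\ \widehat{\mathbf v}\cdot\mathbf n|_F=0\ \forall F\}$, except that for $m=1,d=3$ it is $\{\widehat{\mathbf v}:\widehat{\mathbf v}|_F\in[\mathcal P^0(F)]^3\oplus\mathbf x\times[\mathcal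 P^0(F)]^3\ \forall F\}$; $\widehat{\mathbf V}_{h,0}^m=\{\widehat{\mathbf v}\in\widehat{\mathbf V}_h^m:\mathsf{tang}(\widehat{\mathbf v})=0\text{ on }\mathcal E_h^\partial\}$; $Q_h^m$ = piecewise $\mathcal P^m$ functions, $Q_{h,0}^m$ those with zero mean on $\Omega$, $\overline Q_h=Q_h^0$, $Q_h^{m,o}=\{q\in Q_h^m:(q,1)_K=0\ \forall K\}$. $\mathbf V_h^k=\mathbf V_h^{k,\partial}\oplus\mathbf V_h^{k,o}$ is the hierarchical splitting where $\mathbf V_h^{k,o}$ is spanned by element-supported basis functions with zero normal component on all facets, and $\mathbf V_h^{k,\partial}$ by the lowest-order Raviart–Thomas facet basis functions and divergence-free facet bubbles (normal component supported on one facet); it satisfies $\nabla\cdot\mathbf V_h^{k,\partial}=\overline Q_h$, $\nabla\cdot\mathbf V_h^{k,o}=Q_h^{k-1,o}$. $\mathbf V_{h,0}^{k,\partial}$ is the subspace of $\mathbf V_h^{k,\partial}$ of functions in $\mathbf V_{h,0}^k$. $\underline{\mathbf V}_{h,0}^k=\mathbf V_{h,0}^k\times\widehat{\mathbf V}_{h,0}^{k-1}$, elements $\underline{\mathbf v}_h=(\mathbf v_h,\widehat{\mathbf v}_h)$. Parameters $\mu>0$, $0<\lambda<\infty$, $\tau\ge0$ constants; $\alpha>0$ a stabilization parameter; $P_{k-1}$ is the $L^2$ projection onto $\widehat{\mathbf V}_{h,0}^{k-1}$. Forms: $a(\underline{\mathbf u},\underline{\mathbf v})=\sum_K\Big[\tau(\mathbf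 u,\mathbf v)_K+2\mu\Big((\mathbf D(\mathbf u):\mathbf D(\mathbf v))_K-\langle\mathbf D(\mathbf u)\mathbf n,\mathsf{tang}(\mathbf v-\widehat{\mathbf v})\rangle_{\partial K}-\langle\mathbf D(\mathbf v)\mathbf n,\mathsf{tang}(\mathbf u-\widehat{\mathbf u})\rangle_{\partial K}+\langle\tfrac{\alpha k^2}{h}P_{k-1}\mathsf{tang}(\mathbf u-\widehat{\mathbf u}),P_{k-1}\mathsf{tang}(\mathbf v-\widehat{\mathbf v})\rangle_{\partial K}\Big)\Big]$, $b(p,\mathbf v)=-(p,\nabla\cdot\mathbf v)_{\mathcal T_h}$, $c(p,q)=-\frac1\lambda(p,q)_{\mathcal T_h}$. *)

theory Defs
  imports "HOL-Analysis.Analysis"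
begin

definition convex_polytopal_domain :: "'a::euclidean_space set \<Rightarrow> bool" where
  "convex_polytopal_domain \<Omega> \<longleftrightarrow>
     (DIM('a) = 2 \<or> DIM('a) = 3) \<and> polytope \<Omega> \<and> convex \<Omega> \<and> interior \<Omega> \<noteq> {}"

definition conforming_triangulation :: "'a::euclidean_space set set \<Rightarrow> 'a set \<Rightarrow> bool" where
  "conforming_triangulation T \<Omega> \<longleftrightarrow>
     finite T \<and> T \<noteq> {} \<and> (\<forall>K\<in>T. int DIM('a) simplex K) \<and> \<Union>T = \<Omega> \<and>
     (\<forall>K1\<in>T. \<forall>K2\<in>T. K1 \<inter> K2 = {} \<or> ((K1 \<inter> K2) face_of K1 \<and> (K1 \<inter> K2) face_of K2))"

definition meshsize :: "'a::euclidean_space set set \<Rightarrow> real" where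
  "meshsize T = Max (diameter ` T)"

definition facets :: "'a::euclidean_space set set \<Rightarrow> 'a set set" where
  "facets T = {F. \<exists>K\<in>T. F facet_of K}"

definition bfacets :: "'a::euclidean_space set set \<Rightarrow> 'a set \<Rightarrow> 'a set set" where
  "bfacets T \<Omega> = {F \<in> facets T. F \<subseteq> frontier \<Omega>}"

definition fnormal :: "'a::euclidean_space set \<Rightarrow> 'a" where
  "fnormal F = (SOME n. norm n = 1 \<and> (\<forall>x\<in>F. \<forall>y\<in>F. (x - y) \<bullet> n = 0))"

definition onormal :: "'a::euclidean_space set \<Rightarrow> 'a set \<Rightarrow> 'a" where
  "onormal K F = (SOME n. norm n = 1 \<and> (\<forall>x\<in>F. \<forall>y\<in>F. (x - y) \<bullet> n = 0)
                          \<and> (\<forall>x\<in>F. \<forall>y\<in>K. (y - x) \<bullet> n \<le> 0))"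

definition tang :: "'a::euclidean_space set \<Rightarrow> 'a \<Rightarrow> 'a" where
  "tang F w = w - (w \<bullet> fnormal F) *\<^sub>R fnormal F"

abbreviation vint :: "'a::euclidean_space set \<Rightarrow> ('a \<Rightarrow> real) \<Rightarrow> real" where
  "vint K g \<equiv> (LINT x:K|lborel. g x)"

text \<open>Surface integral over a flat facet F (with respect to (d-1)-dimensional surface
  measure).  By Fubini in orthonormal coordinates adapted to F, it equals the volume
  integral over the prism F + [0,1] n_F of g composed with the orthogonal projection onto
  the affine hull of F.\<close>
definition fprism :: "'a::euclidean_space set \<Rightarrow> 'a set" where
  "fprism F = {y + t *\<^sub>R fnormal F | y t. y \<in> F \<and> 0 \<le> t \<and> t \<le> 1}"

definition fproj :: "'a::euclidean_space set \<Rightarrow> 'a \<Rightarrow> 'a" where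
  "fproj F x = x - ((x - (SOME p. p \<in> F)) \<bullet> fnormal F) *\<^sub>R fnormal F"

definition fint :: "'a::euclidean_space set \<Rightarrow> ('a \<Rightarrow> real) \<Rightarrow> real" where
  "fint F g = (LINT x:fprism F|lborel. g (fproj F x))"

definition mindex :: "nat \<Rightarrow> ('a::euclidean_space \<Rightarrow> nat) set" where
  "mindex m = {\<alpha>. (\<forall>b. b \<notin> Basis \<longrightarrow> \<alpha> b = 0) \<and> sum \<alpha> Basis \<le> m}"

definition poly_fun :: "nat \<Rightarrow> ('a::euclidean_space \<Rightarrow> real) \<Rightarrow> bool" where
  "poly_fun m f \<longleftrightarrow> (\<exists>c. \<forall>x. f x = (\<Sum>\<alpha>\<in>mindex m. c \<alpha> * (\<Prod>b\<in>Basis. (x \<bullet> b) ^ \<alpha> b)))"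

definition vpoly :: "nat \<Rightarrow> ('a::euclidean_space \<Rightarrow> 'a) \<Rightarrow> bool" where
  "vpoly m v \<longleftrightarrow> (\<forall>b\<in>Basis. poly_fun m (\<lambda>x. v x \<bullet> b))"

definition vgrad :: "('a::euclidean_space \<Rightarrow> 'a) \<Rightarrow> 'a \<Rightarrow> 'a \<Rightarrow> 'a" where
  "vgrad v x = frechet_derivative v (at x)"

definition vdiv :: "('a::euclidean_space \<Rightarrow> 'a) \<Rightarrow> 'a \<Rightarrow> real" where
  "vdiv v x = (\<Sum>b\<in>Basis. vgrad v x b \<bullet> b)"

definition ladj :: "('a::euclidean_space \<Rightarrow> 'a) \<Rightarrow> 'a \<Rightarrow> 'a" where
  "ladj A w = (\<Sum>b\<in>Basis. (A b \<bullet> w) *\<^sub>R b)"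

definition symgrad :: "('a::euclidean_space \<Rightarrow> 'a) \<Rightarrow> 'a \<Rightarrow> 'a \<Rightarrow> 'a" where
  "symgrad v x w = (1/2) *\<^sub>R (vgrad v x w + ladj (vgrad v x) w)"

definition ddot :: "('a::euclidean_space \<Rightarrow> 'a) \<Rightarrow> ('a \<Rightarrow> 'a) \<Rightarrow> real" where
  "ddot A B = (\<Sum>b\<in>Basis. A b \<bullet> B b)"

text \<open>Broken (element-wise) functions are represented as families indexed by elements:
  u K is the polynomial representing u on the element K.  Facet functions are families
  indexed by facets.\<close>

type_synonym 'a bvec = "'a set \<Rightarrow> 'a \<Rightarrow> 'a"
type_synonym 'a bscal = "'a set \<Rightarrow> 'a \<Rightarrow> real"

definition hdiv_conf :: "'a::euclidean_space set set \<Rightarrow> 'a bvec \<Rightarrow> bool" where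
  "hdiv_conf T u \<longleftrightarrow> (\<forall>K1\<in>T. \<forall>K2\<in>T. \<forall>F. F facet_of K1 \<and> F facet_of K2 \<and> K1 \<noteq> K2 \<longrightarrow>
      (\<forall>x\<in>F. (u K1 x - u K2 x) \<bullet> fnormal F = 0))"

definition Vh :: "'a::euclidean_space set set \<Rightarrow> nat \<Rightarrow> 'a bvec set" where
  "Vh T k = {u. (\<forall>K\<in>T. vpoly k (u K)) \<and> hdiv_conf T u}"

definition Vh0 :: "'a::euclidean_space set set \<Rightarrow> 'a set \<Rightarrow> nat \<Rightarrow> 'a bvec set" where
  "Vh0 T \<Omega> k = {u \<in> Vh T k. \<forall>K\<in>T. \<forall>F. F facet_of K \<and> F \<in> bfacets T \<Omega> \<longrightarrow>
                      (\<forall>x\<in>F. u K x \<bullet> fnormal F = 0)}"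

definition hat_local :: "nat \<Rightarrow> 'a::euclidean_space set \<Rightarrow> ('a \<Rightarrow> 'a) \<Rightarrow> bool" where
  "hat_local m F w \<longleftrightarrow>
     (if m = 1 \<and> DIM('a) = 3 then
        (\<exists>c W. linear W \<and> (\<forall>x y. W x \<bullet> y = - (x \<bullet> W y)) \<and> (\<forall>x\<in>F. w x = c + W x))
      else
        (\<exists>q. vpoly m q \<and> (\<forall>x\<in>F. w x = q x)) \<and> (\<forall>x\<in>F. w x \<bullet> fnormal F = 0))"

definition hatVh :: "'a::euclidean_space set set \<Rightarrow> nat \<Rightarrow> 'a bvec set" where
  "hatVh T m = {w. \<forall>F\<in>facets T. hat_local m F (w F)}"

definition hatVh0 :: "'a::euclidean_space set set \<Rightarrow> 'a set \<Rightarrow> nat \<Rightarrow> 'a bvec set" where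
  "hatVh0 T \<Omega> m = {w \<in> hatVh T m. \<forall>F\<in>bfacets T \<Omega>. \<forall>x\<in>F. tang F (w F x) = 0}"

definition Qh :: "'a::euclidean_space set set \<Rightarrow> nat \<Rightarrow> 'a bscal set" where
  "Qh T m = {p. \<forall>K\<in>T. poly_fun m (p K)}"

definition Qh0 :: "'a::euclidean_space set set \<Rightarrow> nat \<Rightarrow> 'a bscal set" where
  "Qh0 T m = {p \<in> Qh T m. (\<Sum>K\<in>T. vint K (p K)) = 0}"

definition Qho :: "'a::euclidean_space set set \<Rightarrow> nat \<Rightarrow> 'a bscal set" where
  "Qho T m = {p \<in> Qh T m. \<forall>K\<in>T. vint K (p K) = 0}"

text \<open>V_h^{k,o}: functions of V_h^k with vanishing normal component on every facet
  (the span of the element-supported basis functions).\<close>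
definition Vho :: "'a::euclidean_space set set \<Rightarrow> nat \<Rightarrow> 'a bvec set" where
  "Vho T k = {u \<in> Vh T k. \<forall>K\<in>T. \<forall>F. F facet_of K \<longrightarrow> (\<forall>x\<in>F. u K x \<bullet> fnormal F = 0)}"

definition RT0 :: "'a::euclidean_space set set \<Rightarrow> 'a bvec set" where
  "RT0 T = {u \<in> Vh T 1. \<forall>K\<in>T. \<exists>a c. \<forall>x. u K x = a + c *\<^sub>R x}"

definition fspan :: "'a bvec set \<Rightarrow> 'a::euclidean_space bvec set" where
  "fspan B = {w. \<exists>S c. finite S \<and> S \<subseteq> B \<and> w = (\<lambda>K x. \<Sum>\<phi>\<in>S. c \<phi> *\<^sub>R \<phi> K x)}"

definition eqT :: "'a::euclidean_space set set \<Rightarrow> ('a set \<Rightarrow> 'a \<Rightarrow> 'b) \<Rightarrow> ('a set \<Rightarrow> 'a \<Rightarrow> 'b) \<Rightarrow> bool" where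
  "eqT T u v \<longleftrightarrow> (\<forall>K\<in>T. \<forall>x\<in>K. u K x = v K x)"

text \<open>The hierarchical splitting V_h^k = V_h^{k,\<partial>} (+) V_h^{k,o}: Vd is spanned by the RT0
  functions and by (piecewise) divergence-free facet bubbles (normal component supported on
  one facet); the sum is direct; and, as recorded in the paper,
  div V_h^{k,\<partial>} = Q_h^0 and div V_h^{k,o} = Q_h^{k-1,o}.\<close>
definition hier_split :: "'a::euclidean_space set set \<Rightarrow> nat \<Rightarrow> 'a bvec set \<Rightarrow> bool" where
  "hier_split T k Vd \<longleftrightarrow>
     (\<exists>B. (\<forall>w\<in>B. w \<in> Vh T k \<and> (\<forall>K\<in>T. \<forall>x. vdiv (w K) x = 0) \<and>
               (\<exists>F\<in>facets T. \<forall>K\<in>T. \<forall>G. G facet_of K \<and> G \<noteq> F \<longrightarrow>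
                   (\<forall>x\<in>G. w K x \<bullet> fnormal G = 0)))
          \<and> Vd = fspan (RT0 T \<union> B))
     \<and> Vd \<subseteq> Vh T k
     \<and> (\<forall>u\<in>Vh T k. \<exists>ud\<in>Vd. \<exists>uo\<in>Vho T k. eqT T u (\<lambda>K x. ud K x + uo K x))
     \<and> (\<forall>ud\<in>Vd. \<forall>uo\<in>Vho T k. eqT T (\<lambda>K x. ud K x + uo K x) (\<lambda>K x. 0) \<longrightarrow>
           eqT T ud (\<lambda>K x. 0) \<and> eqT T uo (\<lambda>K x. 0))
     \<and> (\<forall>ud\<in>Vd. (\<lambda>K x. vdiv (ud K) x) \<in> Qh T 0)
     \<and> (\<forall>q\<in>Qh T 0. \<exists>ud\<in>Vd. eqT T (\<lambda>K x. vdiv (ud K) x) q)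
     \<and> (\<forall>uo\<in>Vho T k. (\<lambda>K x. vdiv (uo K) x) \<in> Qho T (k - 1))
     \<and> (\<forall>q\<in>Qho T (k - 1). \<exists>uo\<in>Vho T k. eqT T (\<lambda>K x. vdiv (uo K) x) q)"

definition Vh0d :: "'a::euclidean_space set set \<Rightarrow> 'a set \<Rightarrow> nat \<Rightarrow> 'a bvec set \<Rightarrow> 'a bvec set" where
  "Vh0d T \<Omega> k Vd = Vd \<inter> Vh0 T \<Omega> k"

definition Pproj :: "nat \<Rightarrow> 'a::euclidean_space set \<Rightarrow> ('a \<Rightarrow> 'a) \<Rightarrow> 'a \<Rightarrow> 'a" where
  "Pproj m F w = (SOME p. hat_local m F p \<and>
      (\<forall>q. hat_local m F q \<longrightarrow> fint F (\<lambda>x. (w x - p x) \<bullet> q x) = 0))"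

definition aform ::
  "'a::euclidean_space set set \<Rightarrow> nat \<Rightarrow> real \<Rightarrow> real \<Rightarrow> real \<Rightarrow>
   ('a bvec \<times> 'a bvec) \<Rightarrow> ('a bvec \<times> 'a bvec) \<Rightarrow> real" where
  "aform T k \<tau> \<mu> \<alpha> U V = (case U of (u, uh) \<Rightarrow> case V of (v, vh) \<Rightarrow>
     (\<Sum>K\<in>T. \<tau> * vint K (\<lambda>x. u K x \<bullet> v K x)
       + 2 * \<mu> * (vint K (\<lambda>x. ddot (symgrad (u K) x) (symgrad (v K) x))
          - (\<Sum>F\<in>{F. F facet_of K}. fint F (\<lambda>x. symgrad (u K) x (onormal K F) \<bullet> tang F (v K x - vh F x)))
          - (\<Sum>F\<in>{F. F facet_of K}. fint F (\<lambda>x. symgrad (v K) x (onormal K F) \<bullet> tang F (u K x - uh F x)))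
          + (\<Sum>F\<in>{F. F facet_of K}. fint F (\<lambda>x. (\<alpha> * (real k)^2 / meshsize T) *
               (Pproj (k - 1) F (\<lambda>y. tang F (u K y - uh F y)) x
                 \<bullet> Pproj (k - 1) F (\<lambda>y. tang F (v K y - vh F y)) x))))))"

definition bform :: "'a::euclidean_space set set \<Rightarrow> 'a bscal \<Rightarrow> 'a bvec \<Rightarrow> real" where
  "bform T p v = - (\<Sum>K\<in>T. vint K (\<lambda>x. p K x * vdiv (v K) x))"

definition cform :: "'a::euclidean_space set set \<Rightarrow> real \<Rightarrow> 'a bscal \<Rightarrow> 'a bscal \<Rightarrow> real" where
  "cform T lam p q = - (1 / lam) * (\<Sum>K\<in>T. vint K (\<lambda>x. p K x * q K x))"

definition rhs :: "'a::euclidean_space set set \<Rightarrow> ('a \<Rightarrow> 'a) \<Rightarrow> 'a bvec \<Rightarrow> real" where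
  "rhs T f v = (\<Sum>K\<in>T. vint K (\<lambda>x. f x \<bullet> v K x))"

definition L2vec :: "'a::euclidean_space set \<Rightarrow> ('a \<Rightarrow> 'a) \<Rightarrow> bool" where
  "L2vec \<Omega> f \<longleftrightarrow> f \<in> borel_measurable (restrict_space lborel \<Omega>) \<and>
                    set_integrable lborel \<Omega> (\<lambda>x. (norm (f x))^2)"

end

theory Submission
  imports Defs
begin

lemma poly_fun_deriv:
  assumes "poly_fun m f"
  shows "\<exists>D. (\<forall>x. (f has_derivative D x) (at x)) \<and> (\<forall>h. continuous_on UNIV (\<lambda>x. D x h))"
proof -
  obtain c where c: "\<And>x. f x = (\<Sum>\<alpha>\<in>mindex m. c \<alpha> * (\<Prod>b\<in>Basis. (x \<bullet> b) ^ \<alpha> b))"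
    using assms unfolding poly_fun_def by blast
  define D where "D x h = (\<Sum>\<alpha>\<in>mindex m. c \<alpha> * (\<Sum>b\<in>Basis. (of_nat (\<alpha> b) * (x \<bullet> b) ^ (\<alpha> b - 1) * (h \<bullet> b)) * (\<Prod>j\<in>Basis-{b}. (x \<bullet> j) ^ \<alpha> j)))" for x h
  have fe: "f = (\<lambda>x. \<Sum>\<alpha>\<in>mindex m. c \<alpha> * (\<Prod>b\<in>Basis. (x \<bullet> b) ^ \<alpha> b))" using c by auto
  have pw: "((\<lambda>x. (x \<bullet> b) ^ n) has_derivative (\<lambda>y. real n * (x \<bullet> b) ^ (n - 1) * (y \<bullet> b))) (at x)" for x b n
    by (rule has_derivative_eq_rhs, (rule derivative_eq_intros)+, auto)
  have "(f has_derivative D x) (at x)" for x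
    unfolding fe D_def
    by (intro pw has_derivative_sum has_derivative_mult_right has_derivative_prod has_derivative_power bounded_linear_imp_has_derivative bounded_linear_inner_left)
  moreover have "continuous_on UNIV (\<lambda>x. D x h)" for h
    unfolding D_def by (intro continuous_intros)
  ultimately show ?thesis by blast
qed

lemma vpoly_deriv:
  fixes v :: "'a::euclidean_space \<Rightarrow> 'a"
  assumes "vpoly m v"
  shows "(\<forall>x. v differentiable (at x)) \<and> continuous_on UNIV (vdiv v)"
proof -
  have "\<forall>b\<in>Basis. \<exists>D. (\<forall>x. ((\<lambda>x. v x \<bullet> b) has_derivative D x) (at x)) \<and> (\<forall>h. continuous_on UNIV (\<lambda>x. D x h))"
    using assms poly_fun_deriv unfolding vpoly_def by blast
  then obtain D where D: "\<And>b x. b \<in> Basis \<Longrightarrow> ((\<lambda>x. v x \<bullet> b) has_derivative D b x) (at x)"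
    "\<And>b h. b \<in> Basis \<Longrightarrow> continuous_on UNIV (\<lambda>x. D b x h)"
    by (metis (no_types))
  have ve: "v = (\<lambda>x. \<Sum>b\<in>Basis. (v x \<bullet> b) *\<^sub>R b)"
    by (simp add: euclidean_representation)
  have hd: "(v has_derivative (\<lambda>h. \<Sum>b\<in>Basis. D b x h *\<^sub>R b)) (at x)" for x
    by (subst ve, intro has_derivative_sum has_derivative_scaleR_left D)
  have "vdiv v x = (\<Sum>b\<in>Basis. D b x b)" for x
  proof -
    have fd: "frechet_derivative v (at x) = (\<lambda>h. \<Sum>b\<in>Basis. D b x h *\<^sub>R b)"
      by (rule frechet_derivative_at[OF hd, symmetric])
    have "(\<Sum>b'\<in>Basis. frechet_derivative v (at x) b' \<bullet> b') = (\<Sum>b'\<in>Basis. D b' x b')"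
    proof (rule sum.cong)
      fix b' :: 'a assume "b' \<in> Basis"
      then show "frechet_derivative v (at x) b' \<bullet> b' = D b' x b'"
        unfolding fd by (rule inner_sum_left_Basis)
    qed simp
    then show ?thesis unfolding vdiv_def vgrad_def .
  qed
  then have "vdiv v = (\<lambda>x. \<Sum>b\<in>Basis. D b x b)" by auto
  moreover have "continuous_on UNIV (\<lambda>x. \<Sum>b\<in>Basis. D b x b)"
    by (intro continuous_on_sum D)
  ultimately show ?thesis using hd unfolding differentiable_def by auto
qed

lemma mindex0: "mindex 0 = {(\<lambda>_. 0) :: 'a::euclidean_space \<Rightarrow> nat}"
proof (rule set_eqI)
  fix \<alpha> :: "'a \<Rightarrow> nat"
  show "\<alpha> \<in> mindex 0 \<longleftrightarrow> \<alpha> \<in> {\<lambda>_. 0}"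
  proof
    assume a: "\<alpha> \<in> mindex 0"
    have "\<forall>b\<in>Basis. \<alpha> b = 0" using a unfolding mindex_def by auto
    with a show "\<alpha> \<in> {\<lambda>_. 0}" unfolding mindex_def by (auto intro!: ext)
  qed (auto simp: mindex_def)
qed

lemma poly0_const:
  assumes "poly_fun 0 (f :: 'a::euclidean_space \<Rightarrow> real)"
  shows "f x = f y"
  using assms unfolding poly_fun_def mindex0 by auto

lemma poly_cont:
  assumes "poly_fun m f"
  shows "continuous_on S f"
proof -
  obtain D where "\<forall>x. (f has_derivative D x) (at x)" using poly_fun_deriv[OF assms] by blast
  then show ?thesis
    by (meson continuous_at_imp_continuous_on has_derivative_continuous)
qed

lemma simplex_int:
  assumes "conforming_triangulation T \<Omega>" "K \<in> T"
  shows "compact K" "closed K" "K \<subseteq> closure (interior K)"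
proof -
  have s: "int DIM('a) simplex K" using assms unfolding conforming_triangulation_def by auto
  then show "compact K" by (rule compact_simplex)
  then show "closed K" by (rule compact_imp_closed)
  obtain C where C: "finite C" "\<not> affine_dependent C" "int (card C) = int DIM('a) + 1" "K = convex hull C"
    using s unfolding simplex by blast
  have "aff_dim K = int DIM('a)"
    using aff_dim_affine_independent[OF C(2)] C(3,4) aff_dim_convex_hull by simp
  then have ii: "interior K = rel_interior K" using interior_rel_interior_gen[of K] by simp
  have "C \<noteq> {}" using C(3) by auto
  then have "K \<noteq> {}" using C(4) by simp
  moreover have cK: "convex K" using s by (rule convex_simplex)
  ultimately have "interior K \<noteq> {}" using ii rel_interior_eq_empty by auto
  then have "closure (interior K) = closure K" using convex_closure_interior cK by blast
  then show "K \<subseteq> closure (interior K)" by (simp add: closure_subset)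
qed

lemma div_split:
  fixes u ud uo :: "'a::euclidean_space \<Rightarrow> 'a"
  assumes "vpoly m1 ud" "vpoly m2 uo" "vpoly m3 u"
    and K: "closed K" "K \<subseteq> closure (interior K)"
    and eq: "\<And>y. y \<in> K \<Longrightarrow> u y = ud y + uo y"
    and x: "x \<in> K"
  shows "vdiv u x = vdiv ud x + vdiv uo x"
proof -
  have d1: "\<forall>x. ud differentiable (at x)" "continuous_on UNIV (vdiv ud)" using vpoly_deriv[OF assms(1)] by auto
  have d2: "\<forall>x. uo differentiable (at x)" "continuous_on UNIV (vdiv uo)" using vpoly_deriv[OF assms(2)] by auto
  have d3: "continuous_on UNIV (vdiv u)" using vpoly_deriv[OF assms(3)] by auto
  have inner: "vdiv u z = vdiv ud z + vdiv uo z" if z: "z \<in> interior K" for z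
  proof -
    have "((\<lambda>y. ud y + uo y) has_derivative (\<lambda>h. frechet_derivative ud (at z) h + frechet_derivative uo (at z) h)) (at z)"
      using d1 d2 frechet_derivative_works has_derivative_add by blast
    then have "(u has_derivative (\<lambda>h. frechet_derivative ud (at z) h + frechet_derivative uo (at z) h)) (at z)"
      by (rule has_derivative_transform_within_open[OF _ open_interior z])
         (use eq interior_subset in force)
    then have "frechet_derivative u (at z) = (\<lambda>h. frechet_derivative ud (at z) h + frechet_derivative uo (at z) h)"
      by (rule frechet_derivative_at[symmetric])
    then show ?thesis unfolding vdiv_def vgrad_def by (simp add: inner_add_left sum.distrib)
  qed
  have "closed {z. vdiv u z = vdiv ud z + vdiv uo z}"
    by (intro closed_Collect_eq continuous_intros) (use d1 d2 d3 in \<open>auto intro: continuous_on_subset\<close>)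
  then have "closure (interior K) \<subseteq> {z. vdiv u z = vdiv ud z + vdiv uo z}"
    using inner by (intro closure_minimal) auto
  then show ?thesis using K x by auto
qed

theorem lemma2p1:
  fixes \<Omega> :: "'a::euclidean_space set" and T :: "'a set set"
    and k :: nat and \<mu> lam \<tau> \<alpha> :: real
    and f :: "'a \<Rightarrow> 'a"
    and Vd :: "'a bvec set"
    and u uh ud uo :: "'a bvec" and p pbar po :: "'a bscal"
  assumes dom: "convex_polytopal_domain \<Omega>"
    and mesh: "conforming_triangulation T \<Omega>"
    and params: "\<mu> > 0" "lam > 0" "\<tau> \<ge> 0" "\<alpha> > 0"
    and k: "k \<ge> 1"
    and f: "L2vec \<Omega> f"
    and split: "hier_split T k Vd"
    and sol_u: "u \<in> Vh0 T \<Omega> k" "uh \<in> hatVh0 T \<Omega> (k - 1)"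
    and sol_p: "p \<in> Qh0 T (k - 1)"
    and eq1: "\<forall>v\<in>Vh0 T \<Omega> k. \<forall>vh\<in>hatVh0 T \<Omega> (k - 1).
               aform T k \<tau> \<mu> \<alpha> (u, uh) (v, vh) + bform T p v = rhs T f v"
    and eq2: "\<forall>q\<in>Qh0 T (k - 1). bform T q u + cform T lam p q = 0"
    and dec_u: "ud \<in> Vh0d T \<Omega> k Vd" "uo \<in> Vho T k" "eqT T u (\<lambda>K x. ud K x + uo K x)"
    and dec_p: "pbar \<in> Qh T 0" "po \<in> Qho T (k - 1)" "eqT T p (\<lambda>K x. pbar K x + po K x)"
  shows "\<forall>vo\<in>Vho T k.
           bform T po vo = lam * (\<Sum>K\<in>T. vint K (\<lambda>x. vdiv (uo K) x * vdiv (vo K) x))"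
proof
  fix vo assume vo: "vo \<in> Vho T k"
  define r where "r = (\<lambda>K x. vdiv (vo K) x)"
  have H: "\<forall>ud\<in>Vd. (\<lambda>K x. vdiv (ud K) x) \<in> Qh T 0"
     "\<forall>uo\<in>Vho T k. (\<lambda>K x. vdiv (uo K) x) \<in> Qho T (k - 1)"
    using split unfolding hier_split_def by auto
  have rQ: "r \<in> Qho T (k - 1)" using H(2) vo unfolding r_def by auto
  have rQ0: "r \<in> Qh0 T (k - 1)" using rQ unfolding Qho_def Qh0_def by auto
  have E: "bform T r u + cform T lam p r = 0" using eq2 rQ0 by auto
  have finT: "finite T" using mesh unfolding conforming_triangulation_def by auto
  have udV: "ud \<in> Vd" "ud \<in> Vh T k" using dec_u(1) unfolding Vh0d_def Vh0_def by auto
  have uV: "u \<in> Vh T k" using sol_u(1) unfolding Vh0_def by auto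
  have uoV: "uo \<in> Vh T k" using dec_u(2) unfolding Vho_def by auto
  have voV: "vo \<in> Vh T k" using vo unfolding Vho_def by auto
  have A: "vint K (\<lambda>x. r K x * vdiv (u K) x) = vint K (\<lambda>x. vdiv (uo K) x * vdiv (vo K) x)"
    if K: "K \<in> T" for K
  proof -
    note KK = simplex_int[OF mesh K]
    have Ks: "K \<in> sets lborel" using KK(2) by simp
    have rp: "poly_fun (k - 1) (r K)" using rQ K unfolding Qho_def Qh_def by auto
    have c0: "poly_fun 0 (vdiv (ud K))"
      using H(1) udV(1) K unfolding Qh_def by auto
    have co: "poly_fun (k - 1) (vdiv (uo K))"
      using H(2) dec_u(2) K unfolding Qho_def Qh_def by auto
    define c where "c = vdiv (ud K) 0"
    have cc: "vdiv (ud K) x = c" for x unfolding c_def by (rule poly0_const[OF c0])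
    have vp: "vpoly k (ud K)" "vpoly k (uo K)" "vpoly k (u K)"
      using udV(2) uoV uV K unfolding Vh_def by auto
    have eqK: "\<And>y. y \<in> K \<Longrightarrow> u K y = ud K y + uo K y"
      using dec_u(3) K unfolding eqT_def by auto
    have "vint K (\<lambda>x. r K x * vdiv (u K) x) = vint K (\<lambda>x. c * r K x + r K x * vdiv (uo K) x)"
      by (rule set_lebesgue_integral_cong[OF Ks])
         (auto simp: div_split[OF vp KK(2,3) eqK] cc algebra_simps)
    also have "\<dots> = vint K (\<lambda>x. c * r K x) + vint K (\<lambda>x. r K x * vdiv (uo K) x)"
    proof (rule set_integral_add(2))
      show "set_integrable lborel K (\<lambda>x. c * r K x)"
        unfolding set_integrable_def
        by (rule borel_integrable_compact[OF KK(1)]) (intro continuous_intros poly_cont[OF rp])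
      show "set_integrable lborel K (\<lambda>x. r K x * vdiv (uo K) x)"
        unfolding set_integrable_def
        by (rule borel_integrable_compact[OF KK(1)]) (intro continuous_intros poly_cont[OF rp] poly_cont[OF co])
    qed
    also have "vint K (\<lambda>x. c * r K x) = 0"
      using rQ K unfolding Qho_def by simp
    finally show ?thesis unfolding r_def by (simp add: mult.commute)
  qed
  have B: "vint K (\<lambda>x. p K x * r K x) = vint K (\<lambda>x. po K x * vdiv (vo K) x)"
    if K: "K \<in> T" for K
  proof -
    note KK = simplex_int[OF mesh K]
    have Ks: "K \<in> sets lborel" using KK(2) by simp
    have rp: "poly_fun (k - 1) (r K)" using rQ K unfolding Qho_def Qh_def by auto
    have c0: "poly_fun 0 (pbar K)"
      using dec_p(1) K unfolding Qh_def by auto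
    have co: "poly_fun (k - 1) (po K)"
      using dec_p(2) K unfolding Qho_def Qh_def by auto
    define c where "c = pbar K 0"
    have cc: "pbar K x = c" for x unfolding c_def by (rule poly0_const[OF c0])
    have eqK: "\<And>y. y \<in> K \<Longrightarrow> p K y = pbar K y + po K y"
      using dec_p(3) K unfolding eqT_def by auto
    have "vint K (\<lambda>x. p K x * r K x) = vint K (\<lambda>x. c * r K x + po K x * r K x)"
      by (rule set_lebesgue_integral_cong[OF Ks])
         (auto simp: eqK cc algebra_simps)
    also have "\<dots> = vint K (\<lambda>x. c * r K x) + vint K (\<lambda>x. po K x * r K x)"
    proof (rule set_integral_add(2))
      show "set_integrable lborel K (\<lambda>x. c * r K x)"
        unfolding set_integrable_def
        by (rule borel_integrable_compact[OF KK(1)]) (intro continuous_intros poly_cont[OF rp])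
      show "set_integrable lborel K (\<lambda>x. po K x * r K x)"
        unfolding set_integrable_def
        by (rule borel_integrable_compact[OF KK(1)]) (intro continuous_intros poly_cont[OF rp] poly_cont[OF co])
    qed
    also have "vint K (\<lambda>x. c * r K x) = 0"
      using rQ K unfolding Qho_def by simp
    finally show ?thesis unfolding r_def by simp
  qed
  define SA where "SA = (\<Sum>K\<in>T. vint K (\<lambda>x. vdiv (uo K) x * vdiv (vo K) x))"
  define SB where "SB = (\<Sum>K\<in>T. vint K (\<lambda>x. po K x * vdiv (vo K) x))"
  have "bform T r u = - SA" unfolding bform_def SA_def using A by simp
  moreover have "cform T lam p r = - (1 / lam) * SB" unfolding cform_def SB_def using B by simp
  ultimately have "- SA - (1 / lam) * SB = 0" using E by simp
  then have "SB = - lam * SA" using params(2) by (simp add: field_simps)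
  moreover have "bform T po vo = - SB" unfolding bform_def SB_def by simp
  ultimately show "bform T po vo = lam * SA" by simp
qed

end
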